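(* Let $G$ be a graph with girth at least $5$ and $G\not\cong P_2$, and let $S\subseteq V(G)$ be an MLD-set of $G$. Then each $u\in S$ has at most one neighbor of degree $1$ in $V(G)\setminus S$; define $\overline u$ to be that neighbor if it exists and $\overline u=u$ otherwise. The set $\overline S=\{\overline u:u\in S\}$ is a doubly resolving set of $G$ with $|\overline S|=|S|$. Consequently, $\psi(G)\le\gamma_M(G)$.
   Context: All graphs are finite, simple, undirected and connected, with at least 2 vertices; $d(u,v)$ is the shortest-path distance; the girth is the length of a shortest cycle (infinite if acyclic). A set $S\subseteq V(G)$ is resolving if for all distinct $x,y\in V(G)$ there is $u\in S$ with $d(u,x)\ne d(u,y)$; dominating if every vertex not in $S$ has a neighbor in $S$. An MLD-set is a set both resolving and dominating; $\gamma_M(G)$ is its minimum size. Two vertices $u,v$ doubly resolve a pair $\{x,y\}$ if $d(u,x)-d(u,y)\ne d(v,x)-d(v,y)$. A set $S$ is a doubly resolving set if every pair of distinct vertices of $G$ is doubly resolved by two vertices of $S$; $\psi(G)$ is the minimum size of a doubly resolving set. *)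

theory Defs
  imports Main "HOL-Library.Extended_Nat"
begin

definition walk :: "'a set \<Rightarrow> ('a \<Rightarrow> 'a \<Rightarrow> bool) \<Rightarrow> 'a list \<Rightarrow> bool" where
  "walk V E xs \<longleftrightarrow> xs \<noteq> [] \<and> set xs \<subseteq> V \<and> (\<forall>i. Suc i < length xs \<longrightarrow> E (xs ! i) (xs ! Suc i))"

definition simple_graph :: "'a set \<Rightarrow> ('a \<Rightarrow> 'a \<Rightarrow> bool) \<Rightarrow> bool" where
  "simple_graph V E \<longleftrightarrow> finite V \<and> card V \<ge> 2
     \<and> (\<forall>x y. E x y \<longrightarrow> x \<in> V \<and> y \<in> V)
     \<and> (\<forall>x y. E x y \<longrightarrow> E y x) \<and> (\<forall>x. \<not> E x x)
     \<and> (\<forall>x\<in>V. \<forall>y\<in>V. \<exists>xs. walk V E xs \<and> hd xs = x \<and> last xs = y)"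

definition dist :: "'a set \<Rightarrow> ('a \<Rightarrow> 'a \<Rightarrow> bool) \<Rightarrow> 'a \<Rightarrow> 'a \<Rightarrow> nat" where
  "dist V E x y = (LEAST n. \<exists>xs. walk V E xs \<and> hd xs = x \<and> last xs = y \<and> length xs = Suc n)"

definition is_cycle :: "'a set \<Rightarrow> ('a \<Rightarrow> 'a \<Rightarrow> bool) \<Rightarrow> 'a list \<Rightarrow> bool" where
  "is_cycle V E xs \<longleftrightarrow> walk V E xs \<and> distinct xs \<and> length xs \<ge> 3 \<and> E (last xs) (hd xs)"

definition girth :: "'a set \<Rightarrow> ('a \<Rightarrow> 'a \<Rightarrow> bool) \<Rightarrow> enat" where
  "girth V E = (INF xs \<in> {xs. is_cycle V E xs}. enat (length xs))"

definition iso_P2 :: "'a set \<Rightarrow> ('a \<Rightarrow> 'a \<Rightarrow> bool) \<Rightarrow> bool" where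
  "iso_P2 V E \<longleftrightarrow> (\<exists>a b. a \<noteq> b \<and> V = {a, b} \<and> E a b \<and> E b a
                       \<and> (\<forall>x y. E x y \<longleftrightarrow> (x = a \<and> y = b) \<or> (x = b \<and> y = a)))"

definition degree :: "'a set \<Rightarrow> ('a \<Rightarrow> 'a \<Rightarrow> bool) \<Rightarrow> 'a \<Rightarrow> nat" where
  "degree V E v = card {w \<in> V. E v w}"

definition resolving :: "'a set \<Rightarrow> ('a \<Rightarrow> 'a \<Rightarrow> bool) \<Rightarrow> 'a set \<Rightarrow> bool" where
  "resolving V E S \<longleftrightarrow> S \<subseteq> V \<and>
     (\<forall>x\<in>V. \<forall>y\<in>V. x \<noteq> y \<longrightarrow> (\<exists>u\<in>S. dist V E u x \<noteq> dist V E u y))"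

definition dominating :: "'a set \<Rightarrow> ('a \<Rightarrow> 'a \<Rightarrow> bool) \<Rightarrow> 'a set \<Rightarrow> bool" where
  "dominating V E S \<longleftrightarrow> S \<subseteq> V \<and> (\<forall>x\<in>V - S. \<exists>u\<in>S. E x u)"

definition MLD_set :: "'a set \<Rightarrow> ('a \<Rightarrow> 'a \<Rightarrow> bool) \<Rightarrow> 'a set \<Rightarrow> bool" where
  "MLD_set V E S \<longleftrightarrow> resolving V E S \<and> dominating V E S"

definition gamma_M :: "'a set \<Rightarrow> ('a \<Rightarrow> 'a \<Rightarrow> bool) \<Rightarrow> nat" where
  "gamma_M V E = (LEAST k. \<exists>S. MLD_set V E S \<and> card S = k)"

definition doubly_resolves :: "'a set \<Rightarrow> ('a \<Rightarrow> 'a \<Rightarrow> bool) \<Rightarrow> 'a \<Rightarrow> 'a \<Rightarrow> 'a \<Rightarrow> 'a \<Rightarrow> bool" where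
  "doubly_resolves V E u v x y \<longleftrightarrow>
     int (dist V E u x) - int (dist V E u y) \<noteq> int (dist V E v x) - int (dist V E v y)"

definition doubly_resolving :: "'a set \<Rightarrow> ('a \<Rightarrow> 'a \<Rightarrow> bool) \<Rightarrow> 'a set \<Rightarrow> bool" where
  "doubly_resolving V E S \<longleftrightarrow> S \<subseteq> V \<and>
     (\<forall>x\<in>V. \<forall>y\<in>V. x \<noteq> y \<longrightarrow> (\<exists>u\<in>S. \<exists>v\<in>S. doubly_resolves V E u v x y))"

definition psi :: "'a set \<Rightarrow> ('a \<Rightarrow> 'a \<Rightarrow> bool) \<Rightarrow> nat" where
  "psi V E = (LEAST k. \<exists>S. doubly_resolving V E S \<and> card S = k)"

end

theory Submission imports Defs begin

lemma walk_single[simp]: "walk V E [x] \<longleftrightarrow> x \<in> V"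
  by (simp add: walk_def)

lemma walk_Cons2[simp]: "walk V E (x # y # ys) \<longleftrightarrow> x \<in> V \<and> E x y \<and> walk V E (y # ys)"
proof
  assume h: "walk V E (x # y # ys)"
  have h1: "set (x # y # ys) \<subseteq> V" and h2: "\<And>i. Suc i < length (x # y # ys) \<Longrightarrow> E ((x # y # ys) ! i) ((x # y # ys) ! Suc i)"
    using h unfolding walk_def by blast+
  have "E x y" using h2[of 0] by simp
  moreover have "walk V E (y # ys)" unfolding walk_def
  proof (intro conjI allI impI)
    fix i assume "Suc i < length (y # ys)"
    then show "E ((y # ys) ! i) ((y # ys) ! Suc i)" using h2[of "Suc i"] by simp
  qed (use h1 in auto)
  ultimately show "x \<in> V \<and> E x y \<and> walk V E (y # ys)" using h1 by simp
next
  assume h: "x \<in> V \<and> E x y \<and> walk V E (y # ys)"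
  have h1: "set (y # ys) \<subseteq> V" and h2: "\<And>i. Suc i < length (y # ys) \<Longrightarrow> E ((y # ys) ! i) ((y # ys) ! Suc i)"
    using h unfolding walk_def by blast+
  show "walk V E (x # y # ys)" unfolding walk_def
  proof (intro conjI allI impI)
    fix i assume i: "Suc i < length (x # y # ys)"
    show "E ((x # y # ys) ! i) ((x # y # ys) ! Suc i)"
    proof (cases i)
      case 0 then show ?thesis using h by simp
    next
      case (Suc j) then show ?thesis using h2[of j] i by simp
    qed
  qed (use h h1 in auto)
qed

lemma walk_append:
  "xs \<noteq> [] \<Longrightarrow> ys \<noteq> [] \<Longrightarrow> walk V E (xs @ ys) \<longleftrightarrow> walk V E xs \<and> walk V E ys \<and> E (last xs) (hd ys)"
proof (induction xs)
  case Nil then show ?case by simp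
next
  case (Cons a xs)
  note IH = Cons.IH
  have yne: "ys \<noteq> []" using Cons.prems by simp
  obtain b ys' where ys: "ys = b # ys'" using yne by (cases ys) auto
  show ?case
  proof (cases "xs = []")
    case True then show ?thesis using ys by auto
  next
    case False
    then obtain c xs' where xs: "xs = c # xs'" by (cases xs) auto
    have ih: "walk V E (xs @ ys) \<longleftrightarrow> walk V E xs \<and> walk V E ys \<and> E (last xs) (hd ys)"
      using IH[OF False yne] .
    have "walk V E ((a#xs)@ys) \<longleftrightarrow> a \<in> V \<and> E a c \<and> walk V E (xs@ys)"
      unfolding xs by simp
    also have "\<dots> \<longleftrightarrow> a \<in> V \<and> E a c \<and> (walk V E xs \<and> walk V E ys \<and> E (last xs) (hd ys))"
      using ih by simp
    also have "\<dots> \<longleftrightarrow> walk V E (a#xs) \<and> walk V E ys \<and> E (last (a#xs)) (hd ys)"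
      unfolding xs by auto
    finally show ?thesis .
  qed
qed

lemma walk_rev:
  assumes sym: "\<And>a b. E a b \<Longrightarrow> E b a"
  shows "walk V E xs \<Longrightarrow> walk V E (rev xs)"
proof (induction xs)
  case Nil then show ?case by simp
next
  case (Cons a xs)
  show ?case
  proof (cases "xs = []")
    case True then show ?thesis using Cons.prems by simp
  next
    case False
    then obtain b xs' where xs: "xs = b # xs'" by (cases xs) auto
    have w: "a \<in> V" "E a b" "walk V E xs" using Cons.prems unfolding xs by auto
    have "walk V E (rev xs)" using Cons.IH w(3) by blast
    moreover have "E (last (rev xs)) (hd [a])" using sym[OF w(2)] by (simp add: last_rev xs)
    moreover have "walk V E [a]" using w(1) by simp
    moreover have ne: "rev xs \<noteq> []" using xs by simp
    ultimately have "walk V E (rev xs @ [a])"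
      using walk_append[OF ne, of "[a]" V E] by simp
    then show ?thesis by simp
  qed
qed


locale sg =
  fixes V :: "'a set" and E :: "'a \<Rightarrow> 'a \<Rightarrow> bool"
  assumes G: "simple_graph V E"
begin

lemma finV: "finite V" using G by (simp add: simple_graph_def)
lemma cardV: "card V \<ge> 2" using G by (simp add: simple_graph_def)
lemma eV: "E x y \<Longrightarrow> x \<in> V \<and> y \<in> V" using G by (simp add: simple_graph_def)
lemma esym: "E x y \<Longrightarrow> E y x" using G by (simp add: simple_graph_def)
lemma irr: "\<not> E x x" using G by (simp add: simple_graph_def)
lemma conn: "x \<in> V \<Longrightarrow> y \<in> V \<Longrightarrow> \<exists>xs. walk V E xs \<and> hd xs = x \<and> last xs = y"
  using G by (simp add: simple_graph_def)

abbreviation d where "d \<equiv> dist V E"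

lemma dist_walk:
  assumes "x \<in> V" "y \<in> V"
  shows "\<exists>xs. walk V E xs \<and> hd xs = x \<and> last xs = y \<and> length xs = Suc (d x y)"
proof -
  obtain xs where xs: "walk V E xs" "hd xs = x" "last xs = y" using conn[OF assms] by blast
  then have "length xs = Suc (length xs - 1)" by (cases xs) (auto simp: walk_def)
  then have ex: "\<exists>n. \<exists>xs. walk V E xs \<and> hd xs = x \<and> last xs = y \<and> length xs = Suc n" using xs by blast
  show ?thesis unfolding dist_def by (rule LeastI_ex[OF ex])
qed

lemma dist_le: "walk V E xs \<Longrightarrow> hd xs = x \<Longrightarrow> last xs = y \<Longrightarrow> d x y \<le> length xs - 1"
proof -
  assume h: "walk V E xs" "hd xs = x" "last xs = y"
  then have "length xs = Suc (length xs - 1)" by (cases xs) (auto simp: walk_def)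
  then show ?thesis unfolding dist_def using h by (intro Least_le) auto
qed

lemma dist_self: "x \<in> V \<Longrightarrow> d x x = 0"
  using dist_le[of "[x]" x x] by simp

lemma dist_0: "x \<in> V \<Longrightarrow> y \<in> V \<Longrightarrow> d x y = 0 \<Longrightarrow> x = y"
proof -
  assume h: "x \<in> V" "y \<in> V" "d x y = 0"
  obtain xs where xs: "walk V E xs" "hd xs = x" "last xs = y" "length xs = 1"
    using dist_walk[OF h(1,2)] h(3) by auto
  then obtain z where "xs = [z]" by (cases xs) auto
  then show ?thesis using xs by simp
qed

lemma dist_pos: "x \<in> V \<Longrightarrow> y \<in> V \<Longrightarrow> x \<noteq> y \<Longrightarrow> d x y > 0"
  using dist_0 by blast

lemma dist_1: "E x y \<Longrightarrow> d x y = 1"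
proof -
  assume e: "E x y"
  have "d x y \<le> 1" using dist_le[of "[x,y]" x y] e eV[OF e] by simp
  moreover have "x \<noteq> y" using e irr by auto
  ultimately show ?thesis using dist_pos[of x y] eV[OF e] by simp
qed

lemma dist_1E: "x \<in> V \<Longrightarrow> y \<in> V \<Longrightarrow> d x y = 1 \<Longrightarrow> E x y"
proof -
  assume h: "x \<in> V" "y \<in> V" "d x y = 1"
  obtain xs where xs: "walk V E xs" "hd xs = x" "last xs = y" "length xs = 2"
    using dist_walk[OF h(1,2)] h(3) by auto
  then obtain a b where "xs = [a,b]"
    by (cases xs; cases "tl xs") auto
  then show ?thesis using xs by simp
qed

lemma dist_sym: "x \<in> V \<Longrightarrow> y \<in> V \<Longrightarrow> d x y = d y x"
proof -
  have le: "d a b \<le> d b a" if ab: "a \<in> V" "b \<in> V" for a b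
  proof -
    obtain xs where xs: "walk V E xs" "hd xs = b" "last xs = a" "length xs = Suc (d b a)"
      using dist_walk[OF ab(2,1)] by auto
    have ne: "xs \<noteq> []" using xs by auto
    have "walk V E (rev xs)" using walk_rev[OF esym xs(1)] by blast
    moreover have "hd (rev xs) = a" "last (rev xs) = b" using xs ne by (auto simp: hd_rev last_rev)
    ultimately have "d a b \<le> length (rev xs) - 1" using dist_le by blast
    then show ?thesis using xs by simp
  qed
  assume "x \<in> V" "y \<in> V"
  then show ?thesis using le by (simp add: le_antisym)
qed

lemma dist_tri: "x \<in> V \<Longrightarrow> y \<in> V \<Longrightarrow> z \<in> V \<Longrightarrow> d x z \<le> d x y + d y z"
proof -
  assume h: "x \<in> V" "y \<in> V" "z \<in> V"
  obtain xs where xs: "walk V E xs" "hd xs = x" "last xs = y" "length xs = Suc (d x y)"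
    using dist_walk[OF h(1,2)] by auto
  obtain ys where ys: "walk V E ys" "hd ys = y" "last ys = z" "length ys = Suc (d y z)"
    using dist_walk[OF h(2,3)] by auto
  show ?thesis
  proof (cases "tl ys = []")
    case True
    then have "ys = [y]" using ys by (cases ys) auto
    then have "z = y" using ys by simp
    then show ?thesis using dist_le[OF xs(1-3)] xs(4) by simp
  next
    case False
    then obtain c ys' where ys2: "ys = y # c # ys'" using ys by (cases ys; cases "tl ys") auto
    have xne: "xs \<noteq> []" using xs by auto
    have "walk V E (xs @ c # ys')"
      using walk_append[OF xne, of "c # ys'" V E] xs ys ys2 by simp
    moreover have "hd (xs @ c # ys') = x" using xs xne by simp
    moreover have "last (xs @ c # ys') = z" using ys ys2 by simp
    ultimately have "d x z \<le> length (xs @ c # ys') - 1" using dist_le by blast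
    then show ?thesis using xs ys ys2 by simp
  qed
qed

lemma dist_step: "E u v \<Longrightarrow> w \<in> V \<Longrightarrow> d w v \<le> d w u + 1"
  using dist_tri[of w u v] dist_1[of u v] eV by force

lemma dist_pred:
  assumes "s \<in> V" "w \<in> V" "s \<noteq> w"
  shows "\<exists>v. E v w \<and> d s w = d s v + 1"
proof -
  obtain xs where xs: "walk V E xs" "hd xs = s" "last xs = w" "length xs = Suc (d s w)"
    using dist_walk[OF assms(1,2)] by auto
  have "d s w \<noteq> 0" using dist_0 assms by blast
  then have len: "length xs \<ge> 2" using xs by simp
  define ys where "ys = butlast xs"
  have ysne: "ys \<noteq> []" using len unfolding ys_def by (cases xs) auto
  have xs_eq: "xs = ys @ [w]" using xs len unfolding ys_def
    by (metis append_butlast_last_id list.size(3) not_numeral_le_zero)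
  have w2: "walk V E ys \<and> walk V E [w] \<and> E (last ys) (hd [w])"
    using walk_append[OF ysne, of "[w]" V E] xs(1) xs_eq by simp
  have hys: "hd ys = s" using xs xs_eq ysne by (metis hd_append2)
  have "d s (last ys) \<le> length ys - 1" using dist_le[of ys s "last ys"] w2 hys by blast
  then have "d s (last ys) + 1 \<le> d s w" using xs(4) xs_eq ysne by (cases ys) auto
  moreover have "d s w \<le> d s (last ys) + 1" using dist_step[of "last ys" w s] w2 assms by simp
  ultimately show ?thesis using w2 by (intro exI[of _ "last ys"]) simp
qed

lemma leaf_nbr:
  assumes "degree V E w = 1" "E u w" "E v w"
  shows "v = u"
proof -
  have "card {x \<in> V. E w x} = 1" using assms(1) by (simp add: degree_def)
  then obtain z where z: "{x \<in> V. E w x} = {z}" by (rule card_1_singletonE)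
  have "u \<in> {x \<in> V. E w x}" "v \<in> {x \<in> V. E w x}" using assms esym eV by auto
  then show ?thesis using z by auto
qed

lemma leaf_dist:
  assumes "degree V E w = 1" "E u w" "s \<in> V" "s \<noteq> w"
  shows "d s w = d s u + 1"
proof -
  have wV: "w \<in> V" using eV assms by blast
  obtain v where v: "E v w" "d s w = d s v + 1" using dist_pred[OF assms(3) wV assms(4)] by blast
  have "v = u" using leaf_nbr[OF assms(1,2) v(1)] .
  then show ?thesis using v by simp
qed

lemma leaf_dist':
  assumes "degree V E w = 1" "E u w" "s \<in> V" "s \<noteq> w"
  shows "d w s = d u s + 1"
  using leaf_dist[OF assms] dist_sym eV assms by metis

lemma girth_cycle: "girth V E \<ge> 5 \<Longrightarrow> is_cycle V E xs \<Longrightarrow> length xs \<ge> 5"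
proof -
  assume g: "girth V E \<ge> 5" and c: "is_cycle V E xs"
  have "girth V E \<le> enat (length xs)" unfolding girth_def using c by (intro INF_lower2[of xs]) auto
  then have "(5::enat) \<le> enat (length xs)" using g by (rule order_trans[rotated])
  then show ?thesis by (simp add: numeral_eq_enat)
qed


lemma MLD_facts:
  assumes "MLD_set V E S"
  shows "S \<subseteq> V" "\<And>x. x \<in> V \<Longrightarrow> x \<notin> S \<Longrightarrow> \<exists>u\<in>S. E x u"
    "\<And>x y. x \<in> V \<Longrightarrow> y \<in> V \<Longrightarrow> x \<noteq> y \<Longrightarrow> \<exists>u\<in>S. d u x \<noteq> d u y"
  using assms by (auto simp: MLD_set_def resolving_def dominating_def)

lemma uniq:
  assumes M: "MLD_set V E S" and u: "u \<in> S"
    and h: "E u w1" "w1 \<in> V - S" "degree V E w1 = 1" "E u w2" "w2 \<in> V - S" "degree V E w2 = 1"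
  shows "w1 = w2"
proof (rule ccontr)
  assume ne: "w1 \<noteq> w2"
  obtain s where s: "s \<in> S" "d s w1 \<noteq> d s w2" using MLD_facts(3)[OF M, of w1 w2] h ne by auto
  have sV: "s \<in> V" using s MLD_facts(1)[OF M] by auto
  have "d s w1 = d s u + 1" using leaf_dist[OF h(3) h(1) sV] s h by auto
  moreover have "d s w2 = d s u + 1" using leaf_dist[OF h(6) h(4) sV] s h by auto
  ultimately show False using s by simp
qed

definition barok where
  "barok S bar \<longleftrightarrow> (\<forall>u\<in>S. if (\<exists>w. E u w \<and> w \<in> V - S \<and> degree V E w = 1)
                 then E u (bar u) \<and> bar u \<in> V - S \<and> degree V E (bar u) = 1
                 else bar u = u)"

lemma bar_leaf:
  assumes "barok S bar" "u \<in> S" "bar u \<noteq> u"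
  shows "E u (bar u) \<and> bar u \<in> V \<and> bar u \<notin> S \<and> degree V E (bar u) = 1"
  using assms unfolding barok_def by (auto split: if_splits)

lemma barV: "MLD_set V E S \<Longrightarrow> barok S bar \<Longrightarrow> u \<in> S \<Longrightarrow> bar u \<in> V"
  using bar_leaf[of S bar u] MLD_facts(1)[of S] by (cases "bar u = u") auto

lemma pos:
  assumes M: "MLD_set V E S" and gi: "girth V E \<ge> 5" and nP: "\<not> iso_P2 V E"
    and B: "barok S bar"
    and xV: "x \<in> V" and yV: "y \<in> V" and xy: "x \<noteq> y"
    and C: "\<forall>w\<in>bar ` S. int (d w x) - int (d w y) = c" and cpos: "c > 0"
  shows False
proof -
  note SV = MLD_facts(1)[OF M] and dom = MLD_facts(2)[OF M] and res = MLD_facts(3)[OF M]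
  have C': "\<And>w. w \<in> S \<Longrightarrow> int (d (bar w) x) - int (d (bar w) y) = c" using C by auto
  have xnS: "x \<notin> bar ` S"
  proof
    assume "x \<in> bar ` S"
    then have "int (d x x) - int (d x y) = c" using C by auto
    then show False using dist_self[OF xV] cpos by simp
  qed
  show False
  proof (cases "x \<in> S")
    case True
    then have bx: "bar x \<noteq> x" using xnS by force
    define xb where "xb = bar x"
    have L: "E x xb" "xb \<in> V" "xb \<notin> S" "degree V E xb = 1"
      using bar_leaf[OF B True bx] unfolding xb_def by auto
    have c1: "int (d xb x) - int (d xb y) = c" using C' True unfolding xb_def by blast
    have dxb: "d xb x = 1" using dist_1 esym L by blast
    show False
    proof (cases "y = xb")
      case False
      then have "d xb y > 0" using dist_pos L yV by blast
      then show False using c1 dxb cpos by simp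
    next
      case True
      then have c_1: "c = 1" using c1 dxb dist_self[OF L(2)] by simp
      have Ssub: "v = x" if vS: "v \<in> S" for v
      proof -
        have "bar v = xb"
        proof (rule ccontr)
          assume nb: "bar v \<noteq> xb"
          have bvV: "bar v \<in> V" using barV[OF M B vS] .
          have "d (bar v) xb = d (bar v) x + 1" using leaf_dist[OF L(4) L(1) bvV nb] .
          moreover have "int (d (bar v) x) - int (d (bar v) xb) = c" using C' vS True by blast
          ultimately show False using c_1 by simp
        qed
        then show "v = x"
        proof (cases "bar v = v")
          case True then show ?thesis using `bar v = xb` L vS by auto
        next
          case False
          then have "E v (bar v)" using bar_leaf[OF B vS] by blast
          then show ?thesis using leaf_nbr[OF L(4) L(1)] `bar v = xb` by auto
        qed
      qed
      have Veq: "V = {x, xb}"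
      proof
        show "{x, xb} \<subseteq> V" using xV L by auto
        show "V \<subseteq> {x, xb}"
        proof
          fix z assume zV: "z \<in> V"
          show "z \<in> {x, xb}"
          proof (rule ccontr)
            assume zn: "z \<notin> {x, xb}"
            then have "z \<notin> S" using Ssub by auto
            then obtain s where "s \<in> S" "E z s" using dom zV by blast
            then have ezx: "E z x" using Ssub by auto
            obtain s' where s': "s' \<in> S" "d s' z \<noteq> d s' xb" using res[OF zV L(2)] zn by auto
            then have "s' = x" using Ssub by auto
            then show False using s' dist_1[OF esym[OF ezx]] dist_1[OF L(1)] by simp
          qed
        qed
      qed
      have "iso_P2 V E" unfolding iso_P2_def
      proof (intro exI conjI allI)
        show "x \<noteq> xb" using L irr by auto
        show "V = {x, xb}" by (rule Veq)
        show "E x xb" by (rule L(1))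
        show "E xb x" using esym L(1) .
        fix p q
        show "E p q \<longleftrightarrow> (p = x \<and> q = xb) \<or> (p = xb \<and> q = x)"
          using eV[of p q] Veq irr L(1) esym[OF L(1)] by auto
      qed
      then show False using nP by blast
    qed
  next
    case False
    then obtain u where u: "u \<in> S" "E x u" using dom xV by blast
    have uV: "u \<in> V" using u SV by auto
    have dux: "d u x = 1" using dist_1 esym u by blast
    have dubx: "d (bar u) x = 2" if bu: "bar u \<noteq> u"
    proof -
      have L: "E u (bar u)" "bar u \<in> V" "bar u \<notin> S" "degree V E (bar u) = 1"
        using bar_leaf[OF B u(1) bu] by auto
      have "bar u \<noteq> x" using xnS u by auto
      then have "d (bar u) x = d u x + 1" using leaf_dist'[OF L(4) L(1) xV] by auto
      then show ?thesis using dux by simp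
    qed
    have cases: "y = u \<or> (bar u \<noteq> u \<and> y = bar u)"
    proof (cases "bar u = u")
      case True
      then have "int (d u x) - int (d u y) = c" using C' u by metis
      then have "d u y = 0" using dux cpos by simp
      then show ?thesis using dist_0 uV yV by blast
    next
      case bu: False
      have L: "E u (bar u)" "bar u \<in> V" "bar u \<notin> S" "degree V E (bar u) = 1"
        using bar_leaf[OF B u(1) bu] by auto
      have "int (d (bar u) x) - int (d (bar u) y) = c" using C' u by blast
      then have "d (bar u) y \<le> 1" using dubx[OF bu] cpos by simp
      then consider "d (bar u) y = 0" | "d (bar u) y = 1" by linarith
      then show ?thesis
      proof cases
        case 1 then show ?thesis using dist_0 L yV bu by metis
      next
        case 2 then have "E (bar u) y" using dist_1E L yV by blast
        then have "y = u" using leaf_nbr[OF L(4) L(1)] esym by blast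
        then show ?thesis by simp
      qed
    qed
    show False
    proof (cases "y = u")
      case yu: True
      have c_1: "c = 1"
      proof (cases "bar u = u")
        case True
        then have "int (d u x) - int (d u y) = c" using C' u by metis
        then show ?thesis using dux dist_self[OF uV] yu by simp
      next
        case bu: False
        have L: "E u (bar u)" "bar u \<in> V" "bar u \<notin> S" "degree V E (bar u) = 1"
          using bar_leaf[OF B u(1) bu] by auto
        have "int (d (bar u) x) - int (d (bar u) y) = c" using C' u by blast
        moreover have "d (bar u) u = 1" using dist_1 esym L by blast
        ultimately show ?thesis using dubx[OF bu] yu by simp
      qed
      have key: "d w x = d w u + 1" if wS: "w \<in> S" for w
      proof (cases "bar w = w")
        case True
        then have "int (d w x) - int (d w u) = 1" using C' wS c_1 yu by metis
        then show ?thesis by simp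
      next
        case bw: False
        have L: "E w (bar w)" "bar w \<in> V" "bar w \<notin> S" "degree V E (bar w) = 1"
          using bar_leaf[OF B wS bw] by auto
        have "bar w \<noteq> x" using xnS wS by auto
        then have 1: "d (bar w) x = d w x + 1" using leaf_dist'[OF L(4) L(1) xV] by auto
        have "bar w \<noteq> u" using L u by auto
        then have 2: "d (bar w) u = d w u + 1" using leaf_dist'[OF L(4) L(1) uV] by auto
        have "int (d (bar w) x) - int (d (bar w) u) = 1" using C' wS c_1 yu by metis
        then show ?thesis using 1 2 by simp
      qed
      have degx: "degree V E x \<noteq> 1"
      proof
        assume dx: "degree V E x = 1"
        have "\<exists>w. E u w \<and> w \<in> V - S \<and> degree V E w = 1" using esym[OF u(2)] xV False dx by blast
        moreover have "if (\<exists>w. E u w \<and> w \<in> V - S \<and> degree V E w = 1)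
                 then E u (bar u) \<and> bar u \<in> V - S \<and> degree V E (bar u) = 1
                 else bar u = u" using B u(1) unfolding barok_def by blast
        ultimately have bu: "E u (bar u) \<and> bar u \<in> V - S \<and> degree V E (bar u) = 1"
          by (metis (no_types, lifting))
        have "bar u = x" using uniq[OF M u(1)] bu esym[OF u(2)] xV False dx by blast
        then show False using xnS u by auto
      qed
      obtain z where z: "z \<in> V" "E x z" "z \<noteq> u"
      proof (rule ccontr)
        assume nz: "\<not> thesis"
        have "{w \<in> V. E x w} = {u}" using that nz u uV by blast
        then show False using degx by (simp add: degree_def)
      qed
      have znS: "z \<notin> S"
      proof
        assume "z \<in> S"
        then have "d z x = d z u + 1" using key by blast
        moreover have "d z x = 1" using dist_1 esym z by blast
        ultimately have "d z u = 0" by simp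
        then show False using dist_0 z uV by blast
      qed
      obtain s where s: "s \<in> S" "E z s" using dom z znS by blast
      have sV: "s \<in> V" using s SV by auto
      have "d s x \<le> d s z + d z x" using dist_tri sV z xV by blast
      moreover have "d s z = 1" "d z x = 1" using dist_1 esym s z by blast+
      moreover have "d s x = d s u + 1" using key s by blast
      ultimately have "d s u \<le> 1" by simp
      then consider "d s u = 0" | "d s u = 1" by linarith
      then show False
      proof cases
        case 1
        then have su: "s = u" using dist_0 sV uV by blast
        have "is_cycle V E [u, x, z]" unfolding is_cycle_def
          using uV xV z u s su esym irr by auto
        then show False using girth_cycle[OF gi] by fastforce
      next
        case 2
        then have esu: "E s u" using dist_1E sV uV by blast
        have "s \<noteq> u" using esu irr by auto
        have "x \<noteq> s" using False s by auto
        have "z \<noteq> s" using znS s by auto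
        have "x \<noteq> z" using z irr by auto
        have "u \<noteq> x" using u irr by auto
        have "is_cycle V E [u, x, z, s]" unfolding is_cycle_def
          using uV xV z sV u s esu esym `s \<noteq> u` `x \<noteq> s` `z \<noteq> s` `x \<noteq> z` `u \<noteq> x` by auto
        then show False using girth_cycle[OF gi] by fastforce
      qed
    next
      case ynu: False
      then have bu: "bar u \<noteq> u" and yb: "y = bar u" using cases by auto
      have L: "E u (bar u)" "bar u \<in> V" "bar u \<notin> S" "degree V E (bar u) = 1"
        using bar_leaf[OF B u(1) bu] by auto
      have c2: "c = 2" using C' u dubx[OF bu] dist_self[OF L(2)] yb by fastforce
      have Ssub: "v = u" if vS: "v \<in> S" for v
      proof -
        have "bar v = bar u"
        proof (rule ccontr)
          assume nb: "bar v \<noteq> bar u"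
          have bvV: "bar v \<in> V" using barV[OF M B vS] .
          have "d (bar v) (bar u) = d (bar v) u + 1" using leaf_dist[OF L(4) L(1) bvV nb] .
          moreover have "d (bar v) x \<le> d (bar v) u + 1" using dist_step[OF esym[OF u(2)] bvV] .
          moreover have "int (d (bar v) x) - int (d (bar v) y) = c" using C' vS by blast
          ultimately show False using c2 yb by simp
        qed
        then show "v = u"
        proof (cases "bar v = v")
          case True then show ?thesis using `bar v = bar u` L vS by auto
        next
          case False
          then have "E v (bar v)" using bar_leaf[OF B vS] by blast
          then show ?thesis using leaf_nbr[OF L(4) L(1)] `bar v = bar u` by auto
        qed
      qed
      obtain s where s: "s \<in> S" "d s x \<noteq> d s y" using res[OF xV yV xy] by blast
      then have "s = u" using Ssub by blast
      then show False using s dux dist_1[OF L(1)] yb by simp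
    qed
  qed
qed

lemma zero:
  assumes M: "MLD_set V E S" and B: "barok S bar"
    and xV: "x \<in> V" and yV: "y \<in> V" and xy: "x \<noteq> y"
    and C: "\<forall>w\<in>bar ` S. int (d w x) - int (d w y) = 0"
  shows False
proof -
  note SV = MLD_facts(1)[OF M] and res = MLD_facts(3)[OF M]
  obtain u where u: "u \<in> S" "d u x \<noteq> d u y" using res[OF xV yV xy] by blast
  have uV: "u \<in> V" using u SV by auto
  have Cu: "int (d (bar u) x) - int (d (bar u) y) = 0" using C u by blast
  show False
  proof (cases "bar u = u")
    case True then show False using Cu u by simp
  next
    case bu: False
    have L: "E u (bar u)" "bar u \<in> V" "bar u \<notin> S" "degree V E (bar u) = 1"
      using bar_leaf[OF B u(1) bu] by auto
    show False
    proof (cases "bar u = x")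
      case True
      then have "d (bar u) y = 0" using Cu dist_self[OF xV] by simp
      then show False using dist_0 L yV True xy by blast
    next
      case nx: False
      show False
      proof (cases "bar u = y")
        case True
        then have "d (bar u) x = 0" using Cu dist_self[OF yV] by simp
        then show False using dist_0 L xV True xy by blast
      next
        case ny: False
        have "d (bar u) x = d u x + 1" using leaf_dist'[OF L(4) L(1) xV] nx by auto
        moreover have "d (bar u) y = d u y + 1" using leaf_dist'[OF L(4) L(1) yV] ny by auto
        ultimately show False using Cu u by simp
      qed
    qed
  qed
qed

end

theorem proposition10:
  fixes V :: "'a set" and E :: "'a \<Rightarrow> 'a \<Rightarrow> bool" and S :: "'a set"
  assumes "simple_graph V E"
    and "girth V E \<ge> 5"
    and "\<not> iso_P2 V E"
    and "MLD_set V E S"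
  shows "(\<forall>u\<in>S. \<forall>w1 w2. E u w1 \<and> w1 \<in> V - S \<and> degree V E w1 = 1
                      \<and> E u w2 \<and> w2 \<in> V - S \<and> degree V E w2 = 1 \<longrightarrow> w1 = w2)
    \<and> (\<forall>bar :: 'a \<Rightarrow> 'a.
         (\<forall>u\<in>S. if (\<exists>w. E u w \<and> w \<in> V - S \<and> degree V E w = 1)
                 then E u (bar u) \<and> bar u \<in> V - S \<and> degree V E (bar u) = 1
                 else bar u = u)
         \<longrightarrow> doubly_resolving V E (bar ` S) \<and> card (bar ` S) = card S)
    \<and> psi V E \<le> gamma_M V E"
proof -
  interpret sg V E by (rule sg.intro) (rule assms(1))
  note M = assms(4)
  have P1: "\<forall>u\<in>S. \<forall>w1 w2. E u w1 \<and> w1 \<in> V - S \<and> degree V E w1 = 1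
                      \<and> E u w2 \<and> w2 \<in> V - S \<and> degree V E w2 = 1 \<longrightarrow> w1 = w2"
    using uniq[OF M] by blast
  have P2: "doubly_resolving V E (bar ` T) \<and> card (bar ` T) = card T"
    if MT: "MLD_set V E T" and B: "barok T bar" for T bar
  proof
    note SV = MLD_facts(1)[OF MT] and dom = MLD_facts(2)[OF MT]
    have inj: "inj_on bar T"
    proof
      fix u v assume uv: "u \<in> T" "v \<in> T" "bar u = bar v"
      show "u = v"
      proof (cases "bar u = u")
        case bu: True
        show ?thesis
        proof (cases "bar v = v")
          case True then show ?thesis using uv bu by simp
        next
          case False
          have "bar v \<notin> T" using bar_leaf[OF B uv(2) False] by blast
          then show ?thesis using uv bu by simp
        qed
      next
        case bu: False
        have L: "E u (bar u)" "degree V E (bar u) = 1" "bar u \<notin> T"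
          using bar_leaf[OF B uv(1) bu] by blast+
        show ?thesis
        proof (cases "bar v = v")
          case True then show ?thesis using uv L(3) by simp
        next
          case False
          have "E v (bar v)" using bar_leaf[OF B uv(2) False] by blast
          then have "E v (bar u)" using uv(3) by simp
          then show ?thesis using leaf_nbr[OF L(2) L(1)] by metis
        qed
      qed
    qed
    then show "card (bar ` T) = card T" by (rule card_image)
    have Vne: "V \<noteq> {}" using cardV by auto
    then obtain v0 where "v0 \<in> V" by blast
    have Tne: "T \<noteq> {}" using dom[OF \<open>v0 \<in> V\<close>] by auto
    then obtain s0 where s0: "s0 \<in> T" by blast
    show "doubly_resolving V E (bar ` T)" unfolding doubly_resolving_def
    proof (intro conjI ballI impI)
      show "bar ` T \<subseteq> V" using barV[OF MT B] by auto
      fix x y assume xV: "x \<in> V" and yV: "y \<in> V" and xy: "x \<noteq> y"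
      show "\<exists>u\<in>bar ` T. \<exists>v\<in>bar ` T. doubly_resolves V E u v x y"
      proof (rule ccontr)
        assume N: "\<not> ?thesis"
        define c where "c = int (d (bar s0) x) - int (d (bar s0) y)"
        have C: "\<forall>w\<in>bar ` T. int (d w x) - int (d w y) = c"
        proof
          fix w assume w: "w \<in> bar ` T"
          have "bar s0 \<in> bar ` T" using s0 by blast
          then have "\<not> doubly_resolves V E w (bar s0) x y" using N w by blast
          then show "int (d w x) - int (d w y) = c" unfolding doubly_resolves_def c_def by simp
        qed
        consider "c > 0" | "c = 0" | "c < 0" by linarith
        then show False
        proof cases
          case 1 then show False using pos[OF MT assms(2,3) B xV yV xy C] by blast
        next
          case 2 then show False using zero[OF MT B xV yV xy] C by blast
        next
          case 3
          have C': "\<forall>w\<in>bar ` T. int (d w y) - int (d w x) = - c" using C by auto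
          show False using pos[OF MT assms(2,3) B yV xV xy[symmetric] C'] 3 by simp
        qed
      qed
    qed
  qed
  have P3: "psi V E \<le> gamma_M V E"
  proof -
    have VM: "MLD_set V E V" unfolding MLD_set_def resolving_def dominating_def
    proof (intro conjI ballI impI)
      fix x y assume "x \<in> V" "y \<in> V" "x \<noteq> y"
      then have "d x x \<noteq> d x y" using dist_self[of x] dist_pos[of x y] by simp
      then show "\<exists>u\<in>V. d u x \<noteq> d u y" using \<open>x \<in> V\<close> by blast
    qed auto
    have ex: "\<exists>k S. MLD_set V E S \<and> card S = k" using VM by blast
    have "\<exists>S. MLD_set V E S \<and> card S = gamma_M V E"
      unfolding gamma_M_def by (rule LeastI_ex[OF ex])
    then obtain S0 where S0: "MLD_set V E S0" "card S0 = gamma_M V E" by blast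
    define bar0 where "bar0 u = (if \<exists>w. E u w \<and> w \<in> V - S0 \<and> degree V E w = 1
        then (SOME w. E u w \<and> w \<in> V - S0 \<and> degree V E w = 1) else u)" for u
    have B0: "barok S0 bar0" unfolding barok_def
    proof
      fix u assume "u \<in> S0"
      show "if (\<exists>w. E u w \<and> w \<in> V - S0 \<and> degree V E w = 1)
                 then E u (bar0 u) \<and> bar0 u \<in> V - S0 \<and> degree V E (bar0 u) = 1
                 else bar0 u = u"
      proof (cases "\<exists>w. E u w \<and> w \<in> V - S0 \<and> degree V E w = 1")
        case True
        then show ?thesis unfolding bar0_def using someI_ex[OF True] by simp
      next
        case False
        have b0: "bar0 u = u" unfolding bar0_def using False by (rule if_not_P)
        show ?thesis by (simp only: if_not_P[OF False] b0)
      qed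
    qed
    have "doubly_resolving V E (bar0 ` S0) \<and> card (bar0 ` S0) = gamma_M V E"
      using P2[OF S0(1) B0] S0(2) by simp
    then have "\<exists>S. doubly_resolving V E S \<and> card S = gamma_M V E" by blast
    then show ?thesis unfolding psi_def by (rule Least_le)
  qed
  show ?thesis
  proof (intro conjI allI impI)
    show "\<forall>u\<in>S. \<forall>w1 w2. E u w1 \<and> w1 \<in> V - S \<and> degree V E w1 = 1
                      \<and> E u w2 \<and> w2 \<in> V - S \<and> degree V E w2 = 1 \<longrightarrow> w1 = w2" by (rule P1)
    show "psi V E \<le> gamma_M V E" by (rule P3)
    fix bar :: "'a \<Rightarrow> 'a"
    assume h: "\<forall>u\<in>S. if (\<exists>w. E u w \<and> w \<in> V - S \<and> degree V E w = 1)
                 then E u (bar u) \<and> bar u \<in> V - S \<and> degree V E (bar u) = 1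
                 else bar u = u"
    have "barok S bar" unfolding barok_def by (rule h)
    from P2[OF M this] show "doubly_resolving V E (bar ` S)" "card (bar ` S) = card S" by auto
  qed
qed

end
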